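(* Let $G$ be a planar PCC graph and let $Z$ be the number of vertices $v$ with face vector $f(v)=(5,6,7)$ or $f(v)=(3,3,5,7)$. Then $Z\le 210$.
   Context: $G$ is a finite simple connected graph 2-cell embedded in the sphere; the face vector $f(v)$ is the multiset of sizes (boundary walk lengths) of the faces incident to $v$, one per corner, in nondecreasing order; $K(v)=1-\frac{\deg(v)}{2}+\sum_{\sigma\in F(v)}\frac1{|\sigma|}$. A prism (resp. antiprism) of order $N$ is the planar graph with $2N$ vertices, two $N$-faces and $N$ quadrilaterals (resp. $2N$ triangles), each vertex incident to two quadrilaterals and one $N$-face (resp. three triangles and one $N$-face). A planar PCC graph is such a $G$ with $K(v)>0$, $\deg(v)\ge3$ for all $v$, not a prism or antiprism. *)

theory Defs
  imports Complex_Main "HOL-Library.Multiset"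
begin

text \<open>A finite simple graph with vertex set V and symmetric irreflexive adjacency E,
  together with a rotation system rot: for each vertex v, rot v is a cyclic
  permutation of the neighbourhood of v (the clockwise order of edges around v).  The face permutation sends the dart
  (u,w) to (w, rot w u); faces are its orbits, and the size of a face is the
  length of its boundary walk (= number of darts in the orbit).\<close>

definition nbrs :: "('v \<Rightarrow> 'v \<Rightarrow> bool) \<Rightarrow> 'v \<Rightarrow> 'v set" where
  "nbrs E v = {w. E v w}"

definition deg :: "('v \<Rightarrow> 'v \<Rightarrow> bool) \<Rightarrow> 'v \<Rightarrow> nat" where
  "deg E v = card (nbrs E v)"

definition darts :: "('v \<Rightarrow> 'v \<Rightarrow> bool) \<Rightarrow> ('v \<times> 'v) set" where
  "darts E = {(u, w). E u w}"

definition graph_edges :: "('v \<Rightarrow> 'v \<Rightarrow> bool) \<Rightarrow> 'v set set" where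
  "graph_edges E = {{u, w} | u w. E u w}"

definition simple_graph :: "'v set \<Rightarrow> ('v \<Rightarrow> 'v \<Rightarrow> bool) \<Rightarrow> bool" where
  "simple_graph V E \<longleftrightarrow> finite V \<and> (\<forall>u w. E u w \<longrightarrow> u \<in> V \<and> w \<in> V)
     \<and> (\<forall>u w. E u w \<longrightarrow> E w u) \<and> (\<forall>u. \<not> E u u)"

definition connected_graph :: "'v set \<Rightarrow> ('v \<Rightarrow> 'v \<Rightarrow> bool) \<Rightarrow> bool" where
  "connected_graph V E \<longleftrightarrow> V \<noteq> {} \<and> (\<forall>u\<in>V. \<forall>w\<in>V. E\<^sup>*\<^sup>* u w)"

definition rotation_system :: "'v set \<Rightarrow> ('v \<Rightarrow> 'v \<Rightarrow> bool) \<Rightarrow> ('v \<Rightarrow> 'v \<Rightarrow> 'v) \<Rightarrow> bool" where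
  "rotation_system V E rot \<longleftrightarrow>
     (\<forall>v\<in>V. \<forall>w\<in>nbrs E v. rot v w \<in> nbrs E v
        \<and> nbrs E v = {(rot v ^^ k) w | k. True})"

definition face_perm :: "('v \<Rightarrow> 'v \<Rightarrow> 'v) \<Rightarrow> 'v \<times> 'v \<Rightarrow> 'v \<times> 'v" where
  "face_perm rot d = (snd d, rot (snd d) (fst d))"

definition face_of :: "('v \<Rightarrow> 'v \<Rightarrow> 'v) \<Rightarrow> 'v \<times> 'v \<Rightarrow> ('v \<times> 'v) set" where
  "face_of rot d = {(face_perm rot ^^ k) d | k. True}"

definition faces :: "('v \<Rightarrow> 'v \<Rightarrow> bool) \<Rightarrow> ('v \<Rightarrow> 'v \<Rightarrow> 'v) \<Rightarrow> ('v \<times> 'v) set set" where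
  "faces E rot = face_of rot ` darts E"

text \<open>2-cell embedding in the sphere: connected, and Euler characteristic 2.\<close>
definition spherical_map :: "'v set \<Rightarrow> ('v \<Rightarrow> 'v \<Rightarrow> bool) \<Rightarrow> ('v \<Rightarrow> 'v \<Rightarrow> 'v) \<Rightarrow> bool" where
  "spherical_map V E rot \<longleftrightarrow> simple_graph V E \<and> connected_graph V E
     \<and> rotation_system V E rot
     \<and> int (card V) - int (card (graph_edges E)) + int (card (faces E rot)) = 2"

text \<open>Face vector: one entry per corner at v; the corner preceding the dart (v,w)
  lies on the face containing (v,w).\<close>
definition face_vector :: "('v \<Rightarrow> 'v \<Rightarrow> bool) \<Rightarrow> ('v \<Rightarrow> 'v \<Rightarrow> 'v) \<Rightarrow> 'v \<Rightarrow> nat multiset" where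
  "face_vector E rot v = image_mset (\<lambda>w. card (face_of rot (v, w))) (mset_set (nbrs E v))"

definition curvature :: "('v \<Rightarrow> 'v \<Rightarrow> bool) \<Rightarrow> ('v \<Rightarrow> 'v \<Rightarrow> 'v) \<Rightarrow> 'v \<Rightarrow> real" where
  "curvature E rot v = 1 - real (deg E v) / 2
     + (\<Sum>w\<in>nbrs E v. 1 / real (card (face_of rot (v, w))))"

definition prism_adj :: "nat \<Rightarrow> nat \<Rightarrow> nat \<Rightarrow> bool" where
  "prism_adj N i j \<longleftrightarrow> i < 2 * N \<and> j < 2 * N \<and>
     ((i < N \<and> j < N \<and> (j = (i + 1) mod N \<or> i = (j + 1) mod N))
      \<or> (N \<le> i \<and> N \<le> j \<and> (j - N = (i - N + 1) mod N \<or> i - N = (j - N + 1) mod N))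
      \<or> j = i + N \<or> i = j + N)"

definition antiprism_adj :: "nat \<Rightarrow> nat \<Rightarrow> nat \<Rightarrow> bool" where
  "antiprism_adj N i j \<longleftrightarrow> i < 2 * N \<and> j < 2 * N \<and>
     ((i < N \<and> j < N \<and> (j = (i + 1) mod N \<or> i = (j + 1) mod N))
      \<or> (N \<le> i \<and> N \<le> j \<and> (j - N = (i - N + 1) mod N \<or> i - N = (j - N + 1) mod N))
      \<or> (i < N \<and> (j = N + i \<or> j = N + (i + 1) mod N))
      \<or> (j < N \<and> (i = N + j \<or> i = N + (j + 1) mod N)))"

definition iso_to :: "'v set \<Rightarrow> ('v \<Rightarrow> 'v \<Rightarrow> bool) \<Rightarrow> nat set \<Rightarrow> (nat \<Rightarrow> nat \<Rightarrow> bool) \<Rightarrow> bool" where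
  "iso_to V E W F \<longleftrightarrow> (\<exists>f. bij_betw f V W \<and> (\<forall>u\<in>V. \<forall>w\<in>V. E u w \<longleftrightarrow> F (f u) (f w)))"

definition is_prism :: "'v set \<Rightarrow> ('v \<Rightarrow> 'v \<Rightarrow> bool) \<Rightarrow> bool" where
  "is_prism V E \<longleftrightarrow> (\<exists>N\<ge>3. iso_to V E {0..<2*N} (prism_adj N))"

definition is_antiprism :: "'v set \<Rightarrow> ('v \<Rightarrow> 'v \<Rightarrow> bool) \<Rightarrow> bool" where
  "is_antiprism V E \<longleftrightarrow> (\<exists>N\<ge>3. iso_to V E {0..<2*N} (antiprism_adj N))"

definition planar_PCC :: "'v set \<Rightarrow> ('v \<Rightarrow> 'v \<Rightarrow> bool) \<Rightarrow> ('v \<Rightarrow> 'v \<Rightarrow> 'v) \<Rightarrow> bool" where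
  "planar_PCC V E rot \<longleftrightarrow> spherical_map V E rot
     \<and> (\<forall>v\<in>V. curvature E rot v > 0 \<and> deg E v \<ge> 3)
     \<and> \<not> is_prism V E \<and> \<not> is_antiprism V E"

end

theory Submission
  imports Defs
begin

lemma orbit_all_inj:
  assumes fin: "finite A" and maps: "\<forall>w\<in>A. f w \<in> A"
    and orb: "\<forall>w\<in>A. A = {(f ^^ k) w | k. True}"
  shows "inj_on f A"
proof (rule finite_surj_inj[OF fin], rule subsetI)
  fix x assume x: "x \<in> A"
  then have "f x \<in> A" using maps by blast
  then have "x \<in> {(f ^^ k) (f x) | k. True}" using orb x by blast
  then obtain k where k: "x = (f ^^ k) (f x)" by blast
  have "(f ^^ k) (f x) = f ((f ^^ k) x)"
    by (rule funpow_swap1[symmetric])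
  moreover have "(f ^^ k) x \<in> A" using x maps by (induction k) auto
  ultimately show "x \<in> f ` A" using k by auto
qed

lemma funpow_in: "\<forall>d\<in>D. p d \<in> D \<Longrightarrow> d \<in> D \<Longrightarrow> (p ^^ k) d \<in> D"
  by (induction k) auto

lemma funpow_inj_on: "inj_on p D \<Longrightarrow> \<forall>d\<in>D. p d \<in> D \<Longrightarrow> inj_on (p ^^ k) D"
proof (induction k)
  case 0 then show ?case by simp
next
  case (Suc k)
  show ?case
  proof (rule inj_onI)
    fix x y assume xy: "x \<in> D" "y \<in> D" "(p ^^ Suc k) x = (p ^^ Suc k) y"
    then have "p ((p ^^ k) x) = p ((p ^^ k) y)" by simp
    moreover have "(p ^^ k) x \<in> D" "(p ^^ k) y \<in> D" using xy Suc.prems funpow_in by metis+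
    ultimately have "(p ^^ k) x = (p ^^ k) y" using Suc.prems by (meson inj_onD)
    then show "x = y" using Suc xy by (meson inj_onD)
  qed
qed

lemma perm_period:
  assumes fin: "finite D" and inj: "inj_on p D" and maps: "\<forall>d\<in>D. p d \<in> D" and d: "d \<in> D"
  shows "\<exists>n>0. (p ^^ n) d = d"
proof -
  have "\<not> inj (\<lambda>k. (p ^^ k) d)"
  proof
    assume "inj (\<lambda>k. (p ^^ k) d)"
    moreover have "range (\<lambda>k. (p ^^ k) d) \<subseteq> D" using funpow_in[OF maps d] by auto
    moreover have "finite (range (\<lambda>k. (p ^^ k) d))"
      using fin calculation(2) by (rule finite_subset[rotated])
    ultimately have "finite (UNIV :: nat set)"
      using finite_imageD by blast
    then show False by simp
  qed
  then obtain i j where ij: "i \<noteq> j" "(p ^^ i) d = (p ^^ j) d" unfolding inj_def by blast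
  have main: "\<exists>n>0. (p ^^ n) d = d" if "i < j" "(p ^^ i) d = (p ^^ j) d" for i j
  proof -
    have e1: "(p ^^ (i + (j - i))) d = (p ^^ i) ((p ^^ (j - i)) d)" by (simp add: funpow_add)
    have e2: "i + (j - i) = j" using that by simp
    have "(p ^^ j) d = (p ^^ i) ((p ^^ (j - i)) d)" using e1 unfolding e2 .
    then have "(p ^^ i) ((p ^^ (j - i)) d) = (p ^^ i) d" using that by simp
    moreover have "(p ^^ (j - i)) d \<in> D" using funpow_in[OF maps d] .
    ultimately have "(p ^^ (j - i)) d = d"
      using funpow_inj_on[OF inj maps] d by (meson inj_onD)
    then show ?thesis using that by (intro exI[of _ "j - i"]) auto
  qed
  show ?thesis
  proof (cases "i < j")
    case True then show ?thesis using main ij by blast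
  next
    case False then have "j < i" using ij by simp
    then show ?thesis using main ij by metis
  qed
qed

lemma funpow_mult_fix: "(p ^^ n) d = d \<Longrightarrow> (p ^^ (n * t)) d = d"
  by (induction t) (auto simp: funpow_add)

lemma orbit_same:
  assumes per: "(p ^^ n) d = d" "n > 0"
  shows "{(p ^^ k) ((p ^^ m) d) | k. True} = {(p ^^ k) d | k. True}"
proof
  show "{(p ^^ k) ((p ^^ m) d) | k. True} \<subseteq> {(p ^^ k) d | k. True}"
  proof
    fix x assume "x \<in> {(p ^^ k) ((p ^^ m) d) | k. True}"
    then obtain k where "x = (p ^^ k) ((p ^^ m) d)" by blast
    then have "x = (p ^^ (k + m)) d" by (simp add: funpow_add)
    then show "x \<in> {(p ^^ k) d | k. True}" by blast
  qed
next
  show "{(p ^^ k) d | k. True} \<subseteq> {(p ^^ k) ((p ^^ m) d) | k. True}"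
  proof
    fix x assume "x \<in> {(p ^^ k) d | k. True}"
    then obtain k where x: "x = (p ^^ k) d" by blast
    have "m \<le> n * m" using per(2) by simp
    then have "m \<le> k + n * m" by linarith
    have "(p ^^ (n * m)) d = d" using funpow_mult_fix[OF per(1)] .
    then have "x = (p ^^ k) ((p ^^ (n*m)) d)" using x by simp
    also have "\<dots> = (p ^^ (k + n * m)) d" by (simp add: funpow_add)
    also have "\<dots> = (p ^^ ((k + n * m - m) + m)) d"
      using \<open>m \<le> k + n * m\<close> by simp
    also have "\<dots> = (p ^^ (k + n * m - m)) ((p ^^ m) d)"
      by (simp add: funpow_add)
    finally show "x \<in> {(p ^^ k) ((p ^^ m) d) | k. True}" by blast
  qed
qed


lemma curv_fv:
  assumes "finite (nbrs E v)"
  shows "curvature E rot v = 1 - real (size (face_vector E rot v)) / 2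
     + sum_mset (image_mset (\<lambda>n. 1 / real n) (face_vector E rot v))"
  unfolding curvature_def face_vector_def deg_def
  by (simp add: sum_unfold_sum_mset multiset.map_comp o_def)

lemma kz1: assumes "finite (nbrs E v)" "face_vector E rot v = {#5, 6, 7#} \<or> face_vector E rot v = {#3, 3, 5, 7#}"
  shows "curvature E rot v = 1 / 105"
  using assms(2) proof
  assume h: "face_vector E rot v = {#5, 6, 7#}"
  show ?thesis unfolding curv_fv[OF assms(1)] h by simp
next
  assume h: "face_vector E rot v = {#3, 3, 5, 7#}"
  show ?thesis unfolding curv_fv[OF assms(1)] h by simp
qed

lemma fin: fixes K :: "'a \<Rightarrow> real"
  assumes finV: "finite V" and pos: "\<forall>v\<in>V. K v > 0" and total: "(\<Sum>v\<in>V. K v) = 2"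
   and ZV: "Z \<subseteq> V" and kz: "\<And>v. v \<in> Z \<Longrightarrow> K v = 1/105"
  shows "card Z \<le> 210"
proof -
  have "(\<Sum>v\<in>Z. K v) = (\<Sum>v\<in>Z. 1 / 105)" using kz by (intro sum.cong) auto
  then have "real (card Z) / 105 = (\<Sum>v\<in>Z. K v)" by simp
  also have "\<dots> \<le> (\<Sum>v\<in>V. K v)"
  proof (rule sum_mono2[OF finV ZV])
    show "\<And>b. b \<in> V - Z \<Longrightarrow> 0 \<le> K b" using pos by (simp add: less_imp_le)
  qed
  finally have "real (card Z) / 105 \<le> 2" using total by simp
  then show "card Z \<le> 210" by linarith
qed

lemma GE: "graph_edges E = (\<lambda>(u, w). {u, w}) ` darts E"
  unfolding graph_edges_def darts_def by (auto simp: image_def)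
lemma pre: assumes sym: "\<And>u w. E u w \<Longrightarrow> E w u" and uw: "E u w"
  shows "{x. x \<in> darts E \<and> (\<lambda>(u, w). {u, w}) x = {u, w}} = {(u, w), (w, u)}"
proof (intro set_eqI iffI)
  fix x assume "x \<in> {x. x \<in> darts E \<and> (\<lambda>(u, w). {u, w}) x = {u, w}}"
  then obtain a b where "x = (a, b)" "{a, b} = {u, w}" by (cases x) auto
  then show "x \<in> {(u, w), (w, u)}" by (auto simp: doubleton_eq_iff)
next
  fix x assume "x \<in> {(u, w), (w, u)}"
  then show "x \<in> {x. x \<in> darts E \<and> (\<lambda>(u, w). {u, w}) x = {u, w}}"
    using uw sym unfolding darts_def by auto
qed

lemma edge_card:
  assumes sym: "\<And>u w. E u w \<Longrightarrow> E w u" and irr: "\<And>u. \<not> E u u" and finD: "finite (darts E)"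
  shows "card (darts E) = 2 * card (graph_edges E)"
proof -
  define g where "g = (\<lambda>(u::'a, w::'a). {u, w})"
  define D where "D = darts E"
  have GE': "graph_edges E = g ` D" unfolding g_def D_def by (rule GE)
  have "card D = (\<Sum>d\<in>D. (1::nat))" by simp
  also have "\<dots> = (\<Sum>e\<in>g ` D. \<Sum>x\<in>{x. x \<in> D \<and> g x = e}. 1)"
    by (rule sum.image_gen) (simp add: D_def finD)
  also have "\<dots> = (\<Sum>e\<in>g ` D. 2)"
  proof (rule sum.cong[OF refl])
    fix e assume "e \<in> g ` D"
    then obtain d where d: "d \<in> D" "e = g d" by blast
    obtain u w where "d = (u, w)" by (cases d)
    then have uw: "E u w" "e = {u, w}" using d unfolding g_def D_def darts_def by auto
    have "{x. x \<in> D \<and> g x = e} = {(u, w), (w, u)}"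
      unfolding uw(2) g_def D_def by (rule pre[of E, OF sym uw(1)])
    moreover have "u \<noteq> w" using irr uw by blast
    ultimately show "(\<Sum>x\<in>{x. x \<in> D \<and> g x = e}. 1) = (2::nat)" by simp
  qed
  also have "\<dots> = 2 * card (g ` D)" by simp
  finally show ?thesis unfolding GE' D_def .
qed

lemma tot:
  assumes degsum: "(\<Sum>v\<in>V. real (deg E v)) = real (card D)"
  and csum: "(\<Sum>v\<in>V. \<Sum>w\<in>nbrs E v. 1 / real (card (face_of rot (v, w))))
      = (\<Sum>d\<in>D. 1 / real (card (face_of rot d)))"
  and facesum: "(\<Sum>d\<in>D. 1 / real (card (face_of rot d))) = real (card (faces E rot))"
  and edgecard: "card D = 2 * card (graph_edges E)"
  and eul: "int (card V) - int (card (graph_edges E)) + int (card (faces E rot)) = 2"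
  shows "(\<Sum>v\<in>V. curvature E rot v) = 2"
proof -
  have "(\<Sum>v\<in>V. curvature E rot v) = (\<Sum>v\<in>V. 1) - (\<Sum>v\<in>V. real (deg E v) / 2)
        + (\<Sum>v\<in>V. \<Sum>w\<in>nbrs E v. 1 / real (card (face_of rot (v, w))))"
    unfolding curvature_def by (simp only: sum.distrib sum_subtractf)
  also have "\<dots> = real (card V) - (\<Sum>v\<in>V. real (deg E v)) / 2
        + (\<Sum>v\<in>V. \<Sum>w\<in>nbrs E v. 1 / real (card (face_of rot (v, w))))"
    by (simp add: sum_divide_distrib)
  also have "\<dots> = real (card V) - real (card (graph_edges E)) + real (card (faces E rot))"
    unfolding degsum csum facesum edgecard by simp
  also have "\<dots> = 2" using eul by linarith
  finally show ?thesis .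
qed

theorem lemma15p1:
  fixes V :: "'v set" and E :: "'v \<Rightarrow> 'v \<Rightarrow> bool" and rot :: "'v \<Rightarrow> 'v \<Rightarrow> 'v"
  assumes "planar_PCC V E rot"
  shows "card {v \<in> V. face_vector E rot v = {#5, 6, 7#}
                     \<or> face_vector E rot v = {#3, 3, 5, 7#}} \<le> 210"
proof -
  have sm: "spherical_map V E rot" and pos: "\<forall>v\<in>V. curvature E rot v > 0"
    using assms unfolding planar_PCC_def by auto
  have finV: "finite V" and inV: "\<And>u w. E u w \<Longrightarrow> u \<in> V \<and> w \<in> V"
    and sym: "\<And>u w. E u w \<Longrightarrow> E w u" and irr: "\<And>u. \<not> E u u"
    using sm unfolding spherical_map_def simple_graph_def by auto
  have rs: "rotation_system V E rot" and eul:
    "int (card V) - int (card (graph_edges E)) + int (card (faces E rot)) = 2"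
    using sm unfolding spherical_map_def by auto
  define D where "D = darts E"
  have DS: "D = Sigma V (nbrs E)" unfolding D_def darts_def nbrs_def using inV by auto
  have finN: "\<And>v. finite (nbrs E v)"
    using finV inV unfolding nbrs_def by (metis (no_types, lifting) mem_Collect_eq finite_subset subsetI)
  have finD: "finite D" unfolding DS using finV finN by auto
  have rotinj: "inj_on (rot v) (nbrs E v)" for v
  proof (cases "v \<in> V")
    case True
    then show ?thesis using rs finN unfolding rotation_system_def
      by (intro orbit_all_inj) auto
  next
    case False
    then have "nbrs E v = {}" using inV unfolding nbrs_def by auto
    then show ?thesis by simp
  qed
  define p where "p = face_perm rot"
  have maps: "\<forall>d\<in>D. p d \<in> D"
  proof
    fix d assume "d \<in> D"
    then obtain u w where d: "d = (u, w)" "E u w" unfolding D_def darts_def by auto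
    then have "u \<in> nbrs E w" "w \<in> V" using sym inV unfolding nbrs_def by auto
    then have "rot w u \<in> nbrs E w" using rs unfolding rotation_system_def by blast
    then show "p d \<in> D" unfolding p_def face_perm_def D_def darts_def nbrs_def d by simp
  qed
  have pinj: "inj_on p D"
  proof (rule inj_onI)
    fix x y assume "x \<in> D" "y \<in> D" "p x = p y"
    then obtain u w u' w' where xy: "x = (u, w)" "E u w" "y = (u', w')" "E u' w'"
      unfolding D_def darts_def by auto
    with \<open>p x = p y\<close> have "w = w'" "rot w u = rot w u'"
      unfolding p_def face_perm_def by auto
    moreover have "u \<in> nbrs E w" "u' \<in> nbrs E w" using xy sym \<open>w = w'\<close> unfolding nbrs_def by auto
    ultimately have "u = u'" using inj_onD[OF rotinj[of w]] by blast
    then show "x = y" using xy \<open>w = w'\<close> by simp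
  qed
  have fo: "face_of rot d = {(p ^^ k) d | k. True}" for d
    unfolding face_of_def p_def by simp
  have foD: "face_of rot d \<subseteq> D" if "d \<in> D" for d
    using funpow_in[OF maps that] unfolding fo by auto
  have foself: "d \<in> face_of rot d" for d
    unfolding fo by (auto intro: exI[of _ 0])
  have fosame: "face_of rot d' = face_of rot d" if dD: "d \<in> D" and dd: "d' \<in> face_of rot d" for d d'
  proof -
    obtain n where n: "n > 0" "(p ^^ n) d = d" using perm_period[OF finD pinj maps dD] by blast
    obtain m where "d' = (p ^^ m) d" using dd unfolding fo by blast
    then show ?thesis unfolding fo using orbit_same[OF n(2) n(1)] by simp
  qed
  have finF: "finite (face_of rot d)" if "d \<in> D" for d
    using foD[OF that] finD finite_subset by blast
  have facesum: "(\<Sum>d\<in>D. 1 / real (card (face_of rot d))) = real (card (faces E rot))"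
  proof -
    have "(\<Sum>d\<in>D. 1 / real (card (face_of rot d)))
       = (\<Sum>F\<in>face_of rot ` D. \<Sum>x\<in>{x. x \<in> D \<and> face_of rot x = F}. 1 / real (card (face_of rot x)))"
      by (rule sum.image_gen[OF finD])
    also have "\<dots> = (\<Sum>F\<in>face_of rot ` D. 1)"
    proof (rule sum.cong[OF refl])
      fix F assume "F \<in> face_of rot ` D"
      then obtain d0 where d0: "d0 \<in> D" "F = face_of rot d0" by blast
      have eq: "{x. x \<in> D \<and> face_of rot x = F} = F"
        using d0 foD fosame foself by blast
      have "(\<Sum>x\<in>{x. x \<in> D \<and> face_of rot x = F}. 1 / real (card (face_of rot x)))
          = (\<Sum>x\<in>F. 1 / real (card F))"
        unfolding eq using d0 fosame by (intro sum.cong) auto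
      also have "\<dots> = 1" using finF[OF d0(1)] foself[of d0] d0(2)
        by (subgoal_tac "card F > 0") (auto simp: card_gt_0_iff)
      finally show "(\<Sum>x\<in>{x. x \<in> D \<and> face_of rot x = F}. 1 / real (card (face_of rot x))) = 1" .
    qed
    also have "\<dots> = real (card (faces E rot))" unfolding faces_def D_def by simp
    finally show ?thesis .
  qed
  have edgecard: "card D = 2 * card (graph_edges E)"
    unfolding D_def by (rule edge_card[of E, OF sym irr finD[unfolded D_def]])
  have degsum: "(\<Sum>v\<in>V. real (deg E v)) = real (card D)"
  proof -
    have "card D = (\<Sum>v\<in>V. deg E v)" unfolding DS deg_def
      by (rule card_SigmaI[OF finV]) (use finN in blast)
    then show ?thesis by (simp add: of_nat_sum)
  qed
  have csum: "(\<Sum>v\<in>V. \<Sum>w\<in>nbrs E v. 1 / real (card (face_of rot (v, w))))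
      = (\<Sum>d\<in>D. 1 / real (card (face_of rot d)))"
  proof -
    have "(\<Sum>v\<in>V. \<Sum>w\<in>nbrs E v. 1 / real (card (face_of rot (v, w))))
      = (\<Sum>(v, w)\<in>Sigma V (nbrs E). 1 / real (card (face_of rot (v, w))))"
      by (rule sum.Sigma[OF finV]) (use finN in blast)
    then show ?thesis unfolding DS by (simp add: split_def)
  qed
  have total: "(\<Sum>v\<in>V. curvature E rot v) = 2"
    by (rule tot[OF degsum csum facesum edgecard eul])
  define Z where "Z = {v \<in> V. face_vector E rot v = {#5, 6, 7#}
                     \<or> face_vector E rot v = {#3, 3, 5, 7#}}"
  have kz: "curvature E rot v = 1 / 105" if "v \<in> Z" for v
  proof -
    have "face_vector E rot v = {#5, 6, 7#} \<or> face_vector E rot v = {#3, 3, 5, 7#}"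
      using that unfolding Z_def by simp
    then show ?thesis by (rule kz1[OF finN])
  qed
  have "card Z \<le> 210"
  proof (rule fin[OF finV pos total _ kz])
    show "Z \<subseteq> V" unfolding Z_def by (rule subsetI) simp
  qed
  then show ?thesis unfolding Z_def .
qed

end
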